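(* Let $\alpha>0$ and $\kappa_l=l^{-\alpha}$. For even $N\ge4$ let $\gamma_\alpha(N)=\sum_{n=0}^{N-1}|f_N(k_n)|$ with $f_N(k)=2\sum_{l=1}^{N/2-1}l^{-\alpha}\sin(kl)+(N/2)^{-\alpha}$ and $k_n=(2n+1)\pi/N$. Then there exist constants $0<c\le C$ and $N_0$ (depending on $\alpha$) such that $c\,N\le\gamma_\alpha(N)\le C\,N$ for all even $N\ge N_0$. Consequently $I_0(\Delta)=[\gamma_\alpha(N)/2]^2T^2$ obeys Heisenberg scaling $\asymp T^2N^2$ for every $\alpha>0$; for power-law decay, super-Heisenberg scaling occurs only at $\alpha=0$.
   Context: $T>0$ is the probe time; $I_0(\Delta)=[\gamma_\alpha(N)/2]^2T^2$ is the optimally controlled quantum Fisher information for estimating the pairing strength $\Delta$ in the long-range Kitaev chain with decay law $\kappa_l$. *)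

theory Defs
  imports Complex_Main
begin

definition fN :: "real \<Rightarrow> nat \<Rightarrow> real \<Rightarrow> real" where
  "fN \<alpha> N k = 2 * (\<Sum>l = 1..N div 2 - 1. real l powr (-\<alpha>) * sin (k * real l))
               + (real N / 2) powr (-\<alpha>)"

definition kmom :: "nat \<Rightarrow> nat \<Rightarrow> real" where
  "kmom N n = (2 * real n + 1) * pi / real N"

definition gamma_alpha :: "real \<Rightarrow> nat \<Rightarrow> real" where
  "gamma_alpha \<alpha> N = (\<Sum>n = 0..<N. \<bar>fN \<alpha> N (kmom N n)\<bar>)"

definition I0 :: "real \<Rightarrow> nat \<Rightarrow> real \<Rightarrow> real" where
  "I0 \<alpha> N T = (gamma_alpha \<alpha> N / 2)^2 * T^2"

end

theory Submission
  imports Defs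
begin


lemma sin_sum_bound:
  fixes k :: real
  assumes "sin (k/2) > 0"
  shows "\<bar>\<Sum>l = p..q. sin (k * real l)\<bar> \<le> 1 / sin (k/2)"
proof (cases "p \<le> q")
  case False then show ?thesis using assms by simp
next
  case True
  define c where "c = (\<lambda>l::nat. cos (k * real l - k/2))"
  have e: "2 * sin (k/2) * sin (k * real l) = c l - c (Suc l)" for l
    unfolding c_def by (simp add: cos_diff cos_add algebra_simps)
  have "2 * sin (k/2) * (\<Sum>l = p..q. sin (k * real l)) = (\<Sum>l = p..q. c l - c (Suc l))"
    by (simp add: sum_distrib_left e)
  also have "\<dots> = c p - c (Suc q)"
    using sum_Suc_diff[of p q "\<lambda>l. - c l"] True by simp
  finally have h: "2 * sin (k/2) * (\<Sum>l = p..q. sin (k * real l)) = c p - c (Suc q)" .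
  have "\<bar>c p - c (Suc q)\<bar> \<le> 2" unfolding c_def
    using abs_cos_le_one[of "k * real p - k/2"] abs_cos_le_one[of "k * real (Suc q) - k/2"] by linarith
  hence "2 * sin (k/2) * \<bar>\<Sum>l = p..q. sin (k * real l)\<bar> \<le> 2"
    using h assms by (simp add: abs_mult)
  thus ?thesis using assms by (simp add: field_simps)
qed

lemma abel_bound:
  fixes a x :: "nat \<Rightarrow> real"
  assumes dec: "\<And>l. p \<le> l \<Longrightarrow> a (Suc l) \<le> a l"
    and nn: "\<And>l. p \<le> l \<Longrightarrow> 0 \<le> a l"
    and B0: "0 \<le> B" and B: "\<And>l. p \<le> l \<Longrightarrow> l \<le> q \<Longrightarrow> \<bar>\<Sum>j = p..l. x j\<bar> \<le> B"
  shows "\<bar>\<Sum>l = p..q. a l * x l\<bar> \<le> a p * B"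
proof (cases "p \<le> q")
  case False
  show ?thesis using B0 using False nn[of p] by simp
next
  case True
  define P where "P = (\<lambda>l. \<Sum>j = p..l. x j)"
  have id: "(\<Sum>l = p..q. a l * x l) = a q * P q + (\<Sum>l = p..<q. (a l - a (Suc l)) * P l)"
    using True
  proof (induction q rule: dec_induct)
    case base then show ?case by (simp add: P_def)
  next
    case (step n)
    have "P (Suc n) = P n + x (Suc n)" unfolding P_def using step(1) by simp
    then show ?case using step by (simp add: algebra_simps)
  qed
  have "\<bar>a q * P q\<bar> \<le> a q * B"
    using B[of q] True nn[of q] by (simp add: abs_mult P_def mult_left_mono)
  moreover have "\<bar>\<Sum>l = p..<q. (a l - a (Suc l)) * P l\<bar> \<le> (\<Sum>l = p..<q. (a l - a (Suc l)) * B)"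
  proof -
    have "\<bar>\<Sum>l = p..<q. (a l - a (Suc l)) * P l\<bar> \<le> (\<Sum>l = p..<q. \<bar>(a l - a (Suc l)) * P l\<bar>)"
      by (rule sum_abs)
    also have "\<dots> \<le> (\<Sum>l = p..<q. (a l - a (Suc l)) * B)"
    proof (rule sum_mono)
      fix l assume "l \<in> {p..<q}"
      hence "a (Suc l) \<le> a l" "\<bar>P l\<bar> \<le> B" using dec B unfolding P_def by auto
      thus "\<bar>(a l - a (Suc l)) * P l\<bar> \<le> (a l - a (Suc l)) * B"
        by (simp add: abs_mult mult_left_mono)
    qed
    finally show ?thesis .
  qed
  moreover have "(\<Sum>l = p..<q. (a l - a (Suc l)) * B) = (a p - a q) * B"
    using sum_Suc_diff'[of p q "\<lambda>l. - a l"] True by (simp add: sum_distrib_right[symmetric])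
  ultimately show ?thesis unfolding id
    by (smt (verit, ccfv_threshold) abs_triangle_ineq left_diff_distrib)
qed



lemma mvt_powr:
  fixes a b p :: real
  assumes "0 < a" "a < b"
  shows "\<exists>z. a < z \<and> z < b \<and> b powr p - a powr p = (b - a) * (p * z powr (p - 1))"
proof -
  have "\<And>x. a \<le> x \<Longrightarrow> x \<le> b \<Longrightarrow> DERIV (\<lambda>z. z powr p) x :> p * x powr (p - 1)"
    using assms by (intro has_real_derivative_powr) auto
  from MVT2[OF assms(2) this] show ?thesis by blast
qed

lemma ineq1:
  fixes \<alpha> :: real
  assumes "0 < \<alpha>" "\<alpha> \<le> 1" "1 \<le> j"
  shows "\<alpha> * real j powr (\<alpha> - 1) \<le> real j powr \<alpha> - real (j - 1) powr \<alpha>"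
proof (cases "j = 1")
  case True then show ?thesis using assms by simp
next
  case False
  hence j2: "2 \<le> j" using assms by simp
  have "0 < real (j-1)" "real (j-1) < real j" using j2 by auto
  from mvt_powr[OF this, of \<alpha>] obtain z where z: "real (j-1) < z" "z < real j"
    "real j powr \<alpha> - real (j - 1) powr \<alpha> = (real j - real (j-1)) * (\<alpha> * z powr (\<alpha> - 1))" by blast
  have "real j - real (j-1) = 1" using j2 by simp
  moreover have "real j powr (\<alpha> - 1) \<le> z powr (\<alpha> - 1)"
    using z j2 assms by (intro powr_mono2') auto
  ultimately show ?thesis using z(3) assms by simp
qed

lemma sum_pow1:
  fixes \<alpha> :: real
  assumes "0 < \<alpha>"
  shows "(\<Sum>j = 1..K. real j powr (\<alpha> - 1)) \<le> (1 + 1/\<alpha>) * real K powr \<alpha>"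
proof (cases "\<alpha> \<le> 1")
  case True
  have "\<alpha> * (\<Sum>j = 1..K. real j powr (\<alpha> - 1)) = (\<Sum>j = 1..K. \<alpha> * real j powr (\<alpha> - 1))"
    by (simp add: sum_distrib_left)
  also have "\<dots> \<le> (\<Sum>j = 1..K. real j powr \<alpha> - real (j - 1) powr \<alpha>)"
    by (rule sum_mono) (use ineq1 assms True in auto)
  also have "\<dots> = real K powr \<alpha>"
  proof (cases K)
    case 0 then show ?thesis by simp
  next
    case (Suc K')
    have "(\<Sum>j = 1..K. real j powr \<alpha> - real (j - 1) powr \<alpha>) = (\<Sum>i = 0..K'. real (Suc i) powr \<alpha> - real i powr \<alpha>)"
      unfolding Suc using sum.shift_bounds_cl_Suc_ivl[of "\<lambda>j. real j powr \<alpha> - real (j - 1) powr \<alpha>" 0 K'] by simp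
    also have "\<dots> = real (Suc K') powr \<alpha> - real 0 powr \<alpha>"
      by (rule sum_Suc_diff) simp
    finally show ?thesis using Suc by simp
  qed
  finally have "\<alpha> * (\<Sum>j = 1..K. real j powr (\<alpha> - 1)) \<le> real K powr \<alpha>" .
  hence "(\<Sum>j = 1..K. real j powr (\<alpha> - 1)) \<le> real K powr \<alpha> / \<alpha>"
    using assms by (simp add: field_simps)
  also have "\<dots> \<le> (1 + 1/\<alpha>) * real K powr \<alpha>"
    using assms by (simp add: field_simps)
  finally show ?thesis .
next
  case False
  have "(\<Sum>j = 1..K. real j powr (\<alpha> - 1)) \<le> (\<Sum>j = 1..K. real K powr (\<alpha> - 1))"
    by (rule sum_mono) (use False in \<open>auto intro!: powr_mono2\<close>)
  also have "\<dots> = real K powr \<alpha>"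
  proof (cases "K = 0")
    case True then show ?thesis by simp
  next
    case False
    then show ?thesis by (simp add: powr_diff)
  qed
  also have "\<dots> \<le> (1 + 1/\<alpha>) * real K powr \<alpha>"
    using assms by (simp add: field_simps)
  finally show ?thesis .
qed

lemma ineq2:
  fixes \<alpha> :: real
  assumes "0 < \<alpha>" "2 \<le> l"
  shows "\<alpha> * real l powr (- 1 - \<alpha>) \<le> real (l - 1) powr (-\<alpha>) - real l powr (-\<alpha>)"
proof -
  have "0 < real (l-1)" "real (l-1) < real l" using assms by auto
  from mvt_powr[OF this, of "-\<alpha>"] obtain z where z: "real (l-1) < z" "z < real l"
    "real l powr (-\<alpha>) - real (l - 1) powr (-\<alpha>) = (real l - real (l-1)) * (-\<alpha> * z powr (-\<alpha> - 1))" by blast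
  have "real l - real (l-1) = 1" using assms by simp
  with z(3) have z3: "real l powr (-\<alpha>) - real (l - 1) powr (-\<alpha>) = - (\<alpha> * z powr (-\<alpha> - 1))" by simp
  have e: "-\<alpha>-1 = -1-\<alpha>" by simp
  have m: "real l powr (-1-\<alpha>) \<le> z powr (-1-\<alpha>)"
    using z assms by (intro powr_mono2') auto
  have mm: "\<alpha> * real l powr (-1-\<alpha>) \<le> \<alpha> * z powr (-\<alpha>-1)"
    unfolding e by (rule mult_left_mono) (use m assms in auto)
  show ?thesis using z3 mm by linarith
qed

lemma sum_pow2:
  fixes \<alpha> :: real
  assumes "0 < \<alpha>"
  shows "(\<Sum>l = 1..K. real l powr (- 1 - \<alpha>)) \<le> 1 + 1/\<alpha>"
proof (cases K)
  case 0 then show ?thesis using assms by simp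
next
  case (Suc K')
  have split: "(\<Sum>l = 1..K. real l powr (- 1 - \<alpha>)) = 1 + (\<Sum>l = 2..K. real l powr (- 1 - \<alpha>))"
    unfolding Suc by (simp add: sum.atLeast_Suc_atMost numeral_2_eq_2)
  have "\<alpha> * (\<Sum>l = 2..K. real l powr (- 1 - \<alpha>)) = (\<Sum>l = 2..K. \<alpha> * real l powr (- 1 - \<alpha>))"
    by (simp add: sum_distrib_left)
  also have "\<dots> \<le> (\<Sum>l = 2..K. real (l - 1) powr (-\<alpha>) - real l powr (-\<alpha>))"
    by (rule sum_mono) (use ineq2 assms in auto)
  also have "\<dots> = (\<Sum>i = 1..K'. real i powr (-\<alpha>) - real (Suc i) powr (-\<alpha>))"
    unfolding Suc using sum.shift_bounds_cl_Suc_ivl[of "\<lambda>l. real (l - 1) powr (-\<alpha>) - real l powr (-\<alpha>)" 1 K'] by (simp add: numeral_2_eq_2)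
  also have "\<dots> \<le> 1"
  proof (cases "1 \<le> K'")
    case True
    have "(\<Sum>i = 1..K'. real i powr (-\<alpha>) - real (Suc i) powr (-\<alpha>)) = real 1 powr (-\<alpha>) - real (Suc K') powr (-\<alpha>)"
      using sum_Suc_diff[of 1 K' "\<lambda>i. - (real i powr (-\<alpha>))"] True by simp
    then show ?thesis by simp
  next
    case False then show ?thesis by simp
  qed
  finally have "(\<Sum>l = 2..K. real l powr (- 1 - \<alpha>)) \<le> 1/\<alpha>"
    using assms by (simp add: field_simps)
  then show ?thesis using split by simp
qed



lemma sin_lb:
  fixes x :: real
  assumes "0 \<le> x" "x \<le> pi/2"
  shows "x / 3 \<le> sin x"
proof -
  have "\<bar>sin x - (\<Sum>m<3. sin_coeff m * x ^ m)\<bar> \<le> inverse (fact 3) * \<bar>x\<bar> ^ 3"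
    by (rule Maclaurin_sin_bound)
  moreover have "(\<Sum>m<3. sin_coeff m * x ^ m) = x"
    by (simp add: sin_coeff_def numeral_3_eq_3)
  moreover have "inverse (fact 3) * \<bar>x\<bar> ^ 3 = x * (x * x) / 6"
    using assms by (simp add: fact_numeral power3_eq_cube field_simps)
  ultimately have h: "\<bar>sin x - x\<bar> \<le> x * (x * x) / 6" by simp
  have "x \<le> 2" using assms pi_less_4 by linarith
  hence "x * x \<le> 2 * 2" using assms by (intro mult_mono) auto
  hence "x * (x * x) \<le> x * 4" using assms by (intro mult_left_mono) auto
  thus ?thesis using h by linarith
qed



lemma cos_sum_zero:
  assumes "0 < j" "j < N"
  shows "(\<Sum>n<N. cos (kmom N n * real j)) = 0"
proof -
  define \<theta> where "\<theta> = real j * pi / real N"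
  have th: "0 < \<theta>" "\<theta> < pi" using assms by (auto simp: \<theta>_def field_simps)
  hence s: "sin \<theta> > 0" by (rule sin_gt_zero)
  have k: "kmom N n * real j = (2 * real n + 1) * \<theta>" for n
    by (simp add: kmom_def \<theta>_def)
  define f where "f = (\<lambda>n::nat. sin (2 * real n * \<theta>))"
  have e: "2 * sin \<theta> * cos (kmom N n * real j) = f (Suc n) - f n" for n
  proof -
    have "f (Suc n) = sin ((2 * real n + 1) * \<theta> + \<theta>)" "f n = sin ((2 * real n + 1) * \<theta> - \<theta>)"
      by (simp_all add: f_def algebra_simps)
    thus ?thesis unfolding k by (simp add: sin_add sin_diff)
  qed
  have "2 * sin \<theta> * (\<Sum>n<N. cos (kmom N n * real j)) = f N - f 0"
    by (simp add: sum_distrib_left e sum_lessThan_telescope)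
  also have "f N = 0"
  proof -
    have "2 * real N * \<theta> = real (2 * j) * pi" using assms by (simp add: \<theta>_def)
    thus ?thesis unfolding f_def by (simp only: sin_npi)
  qed
  finally show ?thesis using s by (simp add: f_def)
qed

lemma sin_sum_zero:
  assumes "2 \<le> N"
  shows "(\<Sum>n<N. sin (kmom N n)) = 0"
proof -
  define \<theta> where "\<theta> = pi / real N"
  have th: "0 < \<theta>" "\<theta> < pi" using assms by (auto simp: \<theta>_def field_simps)
  hence s: "sin \<theta> > 0" by (rule sin_gt_zero)
  have k: "kmom N n = (2 * real n + 1) * \<theta>" for n
    by (simp add: kmom_def \<theta>_def)
  define f where "f = (\<lambda>n::nat. - cos (2 * real n * \<theta>))"
  have e: "2 * sin \<theta> * sin (kmom N n) = f (Suc n) - f n" for n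
  proof -
    have "f (Suc n) = - cos ((2 * real n + 1) * \<theta> + \<theta>)" "f n = - cos ((2 * real n + 1) * \<theta> - \<theta>)"
      by (simp_all add: f_def algebra_simps)
    thus ?thesis unfolding k by (simp add: cos_add cos_diff)
  qed
  have "2 * sin \<theta> * (\<Sum>n<N. sin (kmom N n)) = f N - f 0"
    by (simp add: sum_distrib_left e sum_lessThan_telescope)
  also have "f N = -1"
  proof -
    have h: "2 * real N * \<theta> = 2 * pi" using assms by (simp add: \<theta>_def)
    show ?thesis unfolding f_def by (simp only: h cos_two_pi)
  qed
  finally show ?thesis using s by (simp add: f_def)
qed

lemma orth:
  assumes "4 \<le> N" "1 \<le> l" "l \<le> N div 2 - 1"
  shows "(\<Sum>n<N. sin (kmom N n * real l) * sin (kmom N n)) = (if l = 1 then real N / 2 else 0)"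
proof -
  have e: "sin (kmom N n * real l) * sin (kmom N n) =
     (cos (kmom N n * real (l - 1)) - cos (kmom N n * real (l + 1))) / 2" for n
  proof -
    have "real (l - 1) = real l - 1" using assms by simp
    thus ?thesis by (simp add: cos_diff cos_add algebra_simps)
  qed
  have s2: "(\<Sum>n<N. cos (kmom N n * real (l + 1))) = 0"
    using assms by (intro cos_sum_zero) auto
  have se: "(\<Sum>n<N. sin (kmom N n * real l) * sin (kmom N n)) =
     ((\<Sum>n<N. cos (kmom N n * real (l - 1))) - (\<Sum>n<N. cos (kmom N n * real (l + 1)))) / 2"
    by (simp only: e sum_divide_distrib[symmetric] sum_subtractf)
  show ?thesis
  proof (cases "l = 1")
    case True
    then show ?thesis using s2 unfolding se by simp
  next
    case False
    have s1: "(\<Sum>n<N. cos (kmom N n * real (l - 1))) = 0"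
      using assms False by (intro cos_sum_zero) auto
    show ?thesis using s1 s2 False unfolding se by simp
  qed
qed

lemma lower:
  assumes "4 \<le> N"
  shows "real N \<le> gamma_alpha \<alpha> N"
proof -
  define M where "M = N div 2 - 1"
  have M1: "1 \<le> M" using assms by (simp add: M_def)
  have "(\<Sum>n<N. fN \<alpha> N (kmom N n) * sin (kmom N n)) =
     2 * (\<Sum>l = 1..M. real l powr (-\<alpha>) * (\<Sum>n<N. sin (kmom N n * real l) * sin (kmom N n)))
     + (real N / 2) powr (-\<alpha>) * (\<Sum>n<N. sin (kmom N n))"
    unfolding fN_def M_def[symmetric]
    by (simp add: algebra_simps sum.distrib sum_distrib_left sum_distrib_right sum.swap[of _ "{..<N}"])
  also have "\<dots> = 2 * (\<Sum>l = 1..M. real l powr (-\<alpha>) * (if l = 1 then real N / 2 else 0))"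
    using assms by (simp add: sin_sum_zero orth M_def)
  also have "\<dots> = real N"
    using M1 by (simp add: if_distrib sum.delta' cong: if_cong)
  finally have eq: "(\<Sum>n<N. fN \<alpha> N (kmom N n) * sin (kmom N n)) = real N" .
  have "real N \<le> (\<Sum>n<N. \<bar>fN \<alpha> N (kmom N n) * sin (kmom N n)\<bar>)"
    unfolding eq[symmetric] by (rule order_trans[OF abs_ge_self sum_abs])
  also have "\<dots> \<le> (\<Sum>n<N. \<bar>fN \<alpha> N (kmom N n)\<bar>)"
    by (rule sum_mono) (simp add: abs_mult mult_left_le)
  finally show ?thesis unfolding gamma_alpha_def by (simp add: atLeast0LessThan)
qed



definition Ssum :: "real \<Rightarrow> nat \<Rightarrow> real \<Rightarrow> real" where
  "Ssum \<alpha> N k = (\<Sum>l = 1..N div 2 - 1. real l powr (-\<alpha>) * sin (k * real l))"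

lemma perbound:
  assumes a: "0 < \<alpha>" and N: "even N" "4 \<le> N" and n: "n < N div 2"
  shows "\<bar>Ssum \<alpha> N (kmom N n)\<bar> \<le> kmom N n * (\<Sum>l = 1..N div (2*n+1). real l powr (1-\<alpha>))
           + 3 * (real N / real (2*n+1)) powr (1-\<alpha>)"
proof -
  define m where "m = 2*n+1"
  define k where "k = kmom N n"
  define L where "L = N div m"
  define M where "M = N div 2 - 1"
  define t where "t = (\<lambda>l::nat. real l powr (-\<alpha>) * sin (k * real l))"
  have mN: "m < N" using N n unfolding m_def by presburger
  have m0: "0 < m" by (simp add: m_def)
  have L1: "1 \<le> L" using mN m0 unfolding L_def by (simp add: div_greater_zero_iff Suc_le_eq)
  have k_eq: "k = real m * pi / real N" by (simp add: k_def kmom_def m_def)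
  have Npos: "0 < real N" using N by simp
  have k0: "0 < k" using Npos m0 by (simp add: k_eq)
  have kpi: "k < pi" using mN Npos by (simp add: k_eq field_simps)
  have sk: "k / 6 \<le> sin (k/2)" using sin_lb[of "k/2"] k0 kpi by simp
  have skp: "0 < sin (k/2)" using sk k0 by linarith
  have split: "Ssum \<alpha> N k = (\<Sum>l\<in>{1..M} \<inter> {..L}. t l) + (\<Sum>l\<in>{1..M} - {..L}. t l)"
    unfolding Ssum_def M_def[symmetric] t_def by (rule sum.Int_Diff) simp
  have head: "\<bar>\<Sum>l\<in>{1..M} \<inter> {..L}. t l\<bar> \<le> k * (\<Sum>l = 1..L. real l powr (1-\<alpha>))"
  proof -
    have "\<bar>\<Sum>l\<in>{1..M} \<inter> {..L}. t l\<bar> \<le> (\<Sum>l\<in>{1..M} \<inter> {..L}. \<bar>t l\<bar>)" by (rule sum_abs)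
    also have "\<dots> \<le> (\<Sum>l\<in>{1..L}. \<bar>t l\<bar>)" by (rule sum_mono2) auto
    also have "\<dots> \<le> (\<Sum>l\<in>{1..L}. k * real l powr (1-\<alpha>))"
    proof (rule sum_mono)
      fix l assume l: "l \<in> {1..L}"
      have "\<bar>sin (k * real l)\<bar> \<le> k * real l"
        using abs_sin_x_le_abs_x[of "k * real l"] k0 by simp
      hence "\<bar>t l\<bar> \<le> real l powr (-\<alpha>) * (k * real l)"
        unfolding t_def by (simp add: abs_mult mult_left_mono)
      also have "\<dots> = k * real l powr (1-\<alpha>)"
      proof -
        have "real l * real l powr (-\<alpha>) = real l powr (1-\<alpha>)"
          using powr_mult_base[of "real l" "-\<alpha>"] by simp
        thus ?thesis by (metis mult.commute mult.left_commute)
      qed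
      finally show "\<bar>t l\<bar> \<le> k * real l powr (1-\<alpha>)" .
    qed
    finally show ?thesis by (simp add: sum_distrib_left)
  qed
  have tset: "{1..M} - {..L} = {Suc L..M}" using L1 by auto
  have tail: "\<bar>\<Sum>l\<in>{1..M} - {..L}. t l\<bar> \<le> real (Suc L) powr (-\<alpha>) * (1 / sin (k/2))"
    unfolding tset t_def
  proof (rule abel_bound)
    show "0 \<le> 1 / sin (k/2)" using skp by simp
    fix l assume "Suc L \<le> l"
    thus "real (Suc l) powr (-\<alpha>) \<le> real l powr (-\<alpha>)" "0 \<le> real l powr (-\<alpha>)"
      using a by (auto intro!: powr_mono2')
  next
    fix l show "\<bar>\<Sum>j = Suc L..l. sin (k * real j)\<bar> \<le> 1 / sin (k/2)"
      by (rule sin_sum_bound[OF skp])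
  qed
  have NmL: "real N / real m \<le> real (Suc L)"
  proof -
    have "N < m * Suc L"
    proof -
      have "m * (N div m) + N mod m = N" by (rule mult_div_mod_eq)
      moreover have "N mod m < m" using m0 by simp
      ultimately have "N < m + m * (N div m)" by linarith
      thus ?thesis unfolding L_def by simp
    qed
    hence "real N < real m * real (Suc L)" using of_nat_less_iff[of N "m * Suc L", where 'a=real] by (simp add: algebra_simps)
    thus ?thesis using m0 by (simp add: field_simps)
  qed
  have NmP: "0 < real N / real m" using Npos m0 by simp
  have "real (Suc L) powr (-\<alpha>) * (1 / sin (k/2)) \<le> (real N / real m) powr (-\<alpha>) * (6 / k)"
  proof (rule mult_mono)
    show "real (Suc L) powr (-\<alpha>) \<le> (real N / real m) powr (-\<alpha>)"
      using NmL NmP a by (intro powr_mono2') auto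
    show "1 / sin (k/2) \<le> 6 / k" using sk skp k0 by (simp add: field_simps)
  qed (use skp in auto)
  also have "\<dots> \<le> (real N / real m) powr (-\<alpha>) * (3 * (real N / real m))"
  proof (rule mult_left_mono)
    have eq6: "6 / k = (6 / pi) * (real N / real m)" using m0 Npos by (simp add: k_eq field_simps)
    have "6 / pi \<le> 3" using pi_ge_two by (simp add: field_simps)
    thus "6 / k \<le> 3 * (real N / real m)" unfolding eq6
      by (rule mult_right_mono) (use NmP in auto)
  qed simp
  also have "\<dots> = 3 * (real N / real m) powr (1-\<alpha>)"
  proof -
    have "(real N / real m) * (real N / real m) powr (-\<alpha>) = (real N / real m) powr (1-\<alpha>)"
      using powr_mult_base[of "real N / real m" "-\<alpha>"] NmP by simp
    thus ?thesis by (metis mult.commute mult.left_commute)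
  qed
  finally have tail2: "\<bar>\<Sum>l\<in>{1..M} - {..L}. t l\<bar> \<le> 3 * (real N / real m) powr (1-\<alpha>)"
    using tail by linarith
  show ?thesis
    using split head tail2 unfolding k_def[symmetric] m_def[symmetric] L_def[symmetric]
    by (smt (verit, best) abs_triangle_ineq)
qed



lemma head_sum:
  assumes a: "0 < \<alpha>" and N: "1 \<le> N"
  shows "(\<Sum>n<N div 2. kmom N n * (\<Sum>l = 1..N div (2*n+1). real l powr (1-\<alpha>)))
         \<le> pi * real N * (1 + 1/\<alpha>)"
proof -
  have Npos: "0 < real N" using N by simp
  have set_eq: "{1..N div (2*n+1)} = {l \<in> {1..N}. l \<le> N div (2*n+1)}" for n
    by (auto intro: order_trans[OF _ div_le_dividend])
  have "(\<Sum>n<N div 2. kmom N n * (\<Sum>l = 1..N div (2*n+1). real l powr (1-\<alpha>)))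
      = (\<Sum>n\<in>{..<N div 2}. \<Sum>l\<in>{l \<in> {1..N}. l \<le> N div (2*n+1)}. kmom N n * real l powr (1-\<alpha>))"
    unfolding set_eq[symmetric] by (simp add: sum_distrib_left)
  also have "\<dots> = (\<Sum>l\<in>{1..N}. \<Sum>n\<in>{n \<in> {..<N div 2}. l \<le> N div (2*n+1)}. kmom N n * real l powr (1-\<alpha>))"
    by (rule sum.swap_restrict) auto
  also have "\<dots> \<le> (\<Sum>l\<in>{1..N}. pi * real N * real l powr (-1-\<alpha>))"
  proof (rule sum_mono)
    fix l assume l: "l \<in> {1..N}"
    define A where "A = {n \<in> {..<N div 2}. l \<le> N div (2*n+1)}"
    have lpos: "0 < real l" using l by simp
    have tm: "kmom N n * real l powr (1-\<alpha>) \<le> pi * real l powr (-\<alpha>)" if "n \<in> A" for n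
    proof -
      have "l * (2*n+1) \<le> N" using that unfolding A_def
        by (simp add: less_eq_div_iff_mult_less_eq)
      hence "real l * (2 * real n + 1) \<le> real N"
        using of_nat_le_iff[of "l * (2*n+1)" N, where 'a=real] by (simp add: algebra_simps)
      hence "(real l * (2 * real n + 1)) * pi \<le> real N * pi"
        by (rule mult_right_mono) simp
      hence k: "kmom N n \<le> pi / real l"
        using lpos Npos by (simp add: kmom_def field_simps)
      have "kmom N n * real l powr (1-\<alpha>) \<le> (pi / real l) * real l powr (1-\<alpha>)"
        by (rule mult_right_mono[OF k]) simp
      also have "\<dots> = pi * real l powr (-\<alpha>)"
      proof -
        have e: "real l * real l powr (-\<alpha>) = real l powr (1-\<alpha>)"
          using powr_mult_base[of "real l" "-\<alpha>"] by simp
        show ?thesis unfolding e[symmetric] using lpos by simp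
      qed
      finally show ?thesis .
    qed
    have cardA: "real (card A) \<le> real N / real l"
    proof -
      have "A \<subseteq> {..<N div l}"
      proof
        fix n assume "n \<in> A"
        hence "l * (2*n+1) \<le> N" unfolding A_def by (simp add: less_eq_div_iff_mult_less_eq)
        hence "(2*n+1) * l \<le> N" by (simp add: mult.commute)
        hence "2*n+1 \<le> N div l" using l by (simp add: less_eq_div_iff_mult_less_eq)
        thus "n \<in> {..<N div l}" by simp
      qed
      hence "card A \<le> N div l" by (metis card_lessThan card_mono finite_lessThan)
      hence "real (card A) \<le> real (N div l)" by simp
      also have "\<dots> \<le> real N / real l" by (rule of_nat_div_le_of_nat)
      finally show ?thesis .
    qed
    have "(\<Sum>n\<in>A. kmom N n * real l powr (1-\<alpha>)) \<le> real (card A) * (pi * real l powr (-\<alpha>))"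
      by (rule sum_bounded_above) (rule tm)
    also have "\<dots> \<le> (real N / real l) * (pi * real l powr (-\<alpha>))"
      by (rule mult_right_mono[OF cardA]) simp
    also have "\<dots> = pi * real N * real l powr (-1-\<alpha>)"
    proof -
      have "real l * real l powr (-1-\<alpha>) = real l powr (-\<alpha>)"
        using powr_mult_base[of "real l" "-1-\<alpha>"] by simp
      thus ?thesis using lpos by (simp add: field_simps)
    qed
    finally show "(\<Sum>n\<in>{n \<in> {..<N div 2}. l \<le> N div (2*n+1)}. kmom N n * real l powr (1-\<alpha>))
        \<le> pi * real N * real l powr (-1-\<alpha>)" unfolding A_def .
  qed
  also have "\<dots> = pi * real N * (\<Sum>l = 1..N. real l powr (-1-\<alpha>))"
    by (simp add: sum_distrib_left)
  also have "\<dots> \<le> pi * real N * (1 + 1/\<alpha>)"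
    by (rule mult_left_mono[OF sum_pow2[OF a]]) simp
  finally show ?thesis .
qed

lemma tail_sum:
  assumes a: "0 < \<alpha>" and N: "1 \<le> N"
  shows "(\<Sum>n<N div 2. 3 * (real N / real (2*n+1)) powr (1-\<alpha>)) \<le> 3 * (1 + 1/\<alpha>) * real N"
proof -
  have Npos: "0 < real N" using N by simp
  have eq: "(real N / real (2*n+1)) powr (1-\<alpha>) = real N powr (1-\<alpha>) * real (2*n+1) powr (\<alpha>-1)" for n
  proof -
    have "real (2*n+1) powr (\<alpha>-1) = inverse (real (2*n+1) powr (1-\<alpha>))"
      using powr_minus[of "real (2*n+1)" "1-\<alpha>"] by simp
    thus ?thesis unfolding powr_divide by (simp only: divide_inverse)
  qed
  have "(\<Sum>n<N div 2. real (2*n+1) powr (\<alpha>-1)) = (\<Sum>j\<in>(\<lambda>n. 2*n+1) ` {..<N div 2}. real j powr (\<alpha>-1))"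
    by (rule sum.reindex[symmetric, unfolded comp_def]) (auto simp: inj_on_def)
  also have "\<dots> \<le> (\<Sum>j = 1..N. real j powr (\<alpha>-1))"
    by (rule sum_mono2) auto
  also have "\<dots> \<le> (1 + 1/\<alpha>) * real N powr \<alpha>" by (rule sum_pow1[OF a])
  finally have s: "(\<Sum>n<N div 2. real (2*n+1) powr (\<alpha>-1)) \<le> (1 + 1/\<alpha>) * real N powr \<alpha>" .
  have "(\<Sum>n<N div 2. 3 * (real N / real (2*n+1)) powr (1-\<alpha>))
      = 3 * real N powr (1-\<alpha>) * (\<Sum>n<N div 2. real (2*n+1) powr (\<alpha>-1))"
    unfolding eq by (simp add: sum_distrib_left mult.assoc)
  also have "\<dots> \<le> 3 * real N powr (1-\<alpha>) * ((1 + 1/\<alpha>) * real N powr \<alpha>)"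
    by (rule mult_left_mono[OF s]) simp
  also have "\<dots> = 3 * (1 + 1/\<alpha>) * (real N powr (1-\<alpha>) * real N powr \<alpha>)" by simp
  also have "real N powr (1-\<alpha>) * real N powr \<alpha> = real N"
    using Npos by (simp add: powr_add[symmetric])
  finally show ?thesis .
qed



lemma Ssum_sym:
  assumes "n < N"
  shows "Ssum \<alpha> N (kmom N (N - Suc n)) = - Ssum \<alpha> N (kmom N n)"
proof -
  have k: "kmom N (N - Suc n) = 2 * pi - kmom N n"
  proof -
    have "real (N - Suc n) = real N - 1 - real n" using assms by simp
    moreover have "real N > 0" using assms by simp
    ultimately show ?thesis by (simp add: kmom_def field_simps)
  qed
  have "sin ((2 * pi - kmom N n) * real l) = - sin (kmom N n * real l)" for l :: nat
  proof -
    have "(2 * pi - kmom N n) * real l = real (2*l) * pi - kmom N n * real l" by (simp add: algebra_simps)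
    thus ?thesis by (simp add: sin_diff)
  qed
  thus ?thesis unfolding Ssum_def k by (simp add: sum_negf)
qed

lemma upper:
  assumes a: "0 < \<alpha>" and N: "even N" "4 \<le> N"
  shows "gamma_alpha \<alpha> N \<le> 29 * (1 + 1/\<alpha>) * real N"
proof -
  define S where "S = (\<lambda>n. \<bar>Ssum \<alpha> N (kmom N n)\<bar>)"
  define h where "h = (\<lambda>n. if n \<in> {..<N div 2} then S n else 0)"
  have Npos: "0 < real N" using N by simp
  have half: "(\<Sum>n<N div 2. S n) \<le> 7 * (1 + 1/\<alpha>) * real N"
  proof -
    have "(\<Sum>n<N div 2. S n) \<le> (\<Sum>n<N div 2. kmom N n * (\<Sum>l = 1..N div (2*n+1). real l powr (1-\<alpha>))
           + 3 * (real N / real (2*n+1)) powr (1-\<alpha>))"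
      unfolding S_def by (rule sum_mono) (use perbound[OF a N] in auto)
    also have "\<dots> \<le> pi * real N * (1 + 1/\<alpha>) + 3 * (1 + 1/\<alpha>) * real N"
      unfolding sum.distrib using head_sum[OF a] tail_sum[OF a] N by (intro add_mono) auto
    also have "\<dots> \<le> 7 * (1 + 1/\<alpha>) * real N"
    proof -
      define x where "x = real N * (1 + 1/\<alpha>)"
      have "pi * x \<le> 4 * x"
        using pi_less_4 a Npos unfolding x_def by (intro mult_right_mono) auto
      moreover have "pi * real N * (1 + 1/\<alpha>) = pi * x" "3 * (1 + 1/\<alpha>) * real N = 3 * x"
        "7 * (1 + 1/\<alpha>) * real N = 7 * x" unfolding x_def by simp_all
      ultimately show ?thesis by linarith
    qed
    finally show ?thesis .
  qed
  have hnn: "0 \<le> h n" for n unfolding h_def S_def by simp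
  have pt: "S n \<le> h n + h (N - Suc n)" if "n < N" for n
  proof (cases "n < N div 2")
    case True
    hence "h n = S n" unfolding h_def by simp
    thus ?thesis using hnn[of "N - Suc n"] by simp
  next
    case False
    hence "N - Suc n < N div 2" using N that by presburger
    moreover have "S (N - Suc n) = S n" unfolding S_def using Ssum_sym[OF that] by simp
    ultimately show ?thesis unfolding h_def using False by (simp add: S_def)
  qed
  have hsum: "(\<Sum>n<N. h n) = (\<Sum>n<N div 2. S n)"
  proof -
    have "(\<Sum>n<N. h n) = (\<Sum>n\<in>{..<N} \<inter> {..<N div 2}. S n)"
      unfolding h_def using sum.inter_restrict[of "{..<N}" S "{..<N div 2}"] by simp
    also have "{..<N} \<inter> {..<N div 2} = {..<N div 2}" by auto
    finally show ?thesis .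
  qed
  have full: "(\<Sum>n<N. S n) \<le> 14 * (1 + 1/\<alpha>) * real N"
  proof -
    have "(\<Sum>n<N. S n) \<le> (\<Sum>n<N. h n + h (N - Suc n))" by (rule sum_mono) (use pt in auto)
    also have "\<dots> = (\<Sum>n<N. h n) + (\<Sum>n<N. h n)"
      by (simp add: sum.distrib sum.nat_diff_reindex)
    finally have "(\<Sum>n<N. S n) \<le> 2 * (\<Sum>n<N div 2. S n)" using hsum by simp
    also have "\<dots> \<le> 2 * (7 * (1 + 1/\<alpha>) * real N)" using half by simp
    also have "\<dots> = 14 * (1 + 1/\<alpha>) * real N" by simp
    finally show ?thesis .
  qed
  have bpt: "\<bar>fN \<alpha> N (kmom N n)\<bar> \<le> 2 * S n + 1" for n
  proof -
    have "(real N / 2) powr (-\<alpha>) \<le> 1"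
    proof -
      have "1 \<le> real N / 2" using N by simp
      thus ?thesis using a by (simp add: powr_le_one_le ge_one_powr_ge_zero powr_minus
            inverse_le_1_iff)
    qed
    moreover have "0 \<le> (real N / 2) powr (-\<alpha>)" by simp
    ultimately show ?thesis unfolding fN_def S_def Ssum_def[symmetric] by linarith
  qed
  have "gamma_alpha \<alpha> N \<le> (\<Sum>n<N. 2 * S n + 1)"
    unfolding gamma_alpha_def atLeast0LessThan by (rule sum_mono) (rule bpt)
  also have "\<dots> = 2 * (\<Sum>n<N. S n) + real N" by (simp add: sum.distrib sum_distrib_left)
  also have "\<dots> \<le> 29 * (1 + 1/\<alpha>) * real N"
  proof -
    define x where "x = (1 + 1/\<alpha>) * real N"
    have e1: "14 * (1 + 1/\<alpha>) * real N = 14 * x" "29 * (1 + 1/\<alpha>) * real N = 29 * x"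
      unfolding x_def by simp_all
    have "real N \<le> x" unfolding x_def using a Npos by (simp add: field_simps)
    thus ?thesis using full unfolding e1 by linarith
  qed
  finally show ?thesis .
qed


lemma sq_aux: "((c::real) * n / 2)^2 * t^2 = (c/2)^2 * t^2 * n^2"
  by (simp add: power2_eq_square field_simps)

theorem mainTheorem7:
  fixes \<alpha> :: real
  assumes "\<alpha> > 0"
  shows "\<exists>c C N0. 0 < c \<and> c \<le> C \<and>
    (\<forall>N::nat. even N \<and> N \<ge> 4 \<and> N \<ge> N0 \<longrightarrow>
       c * real N \<le> gamma_alpha \<alpha> N \<and> gamma_alpha \<alpha> N \<le> C * real N \<and>
       (\<forall>T::real. T > 0 \<longrightarrow>
          (c / 2)^2 * T^2 * (real N)^2 \<le> I0 \<alpha> N T \<and>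
          I0 \<alpha> N T \<le> (C / 2)^2 * T^2 * (real N)^2))"
proof (intro exI conjI allI impI)
  define C where "C = 29 * (1 + 1/\<alpha>)"
  show "(0::real) < 1" by simp
  show "1 \<le> 29 * (1 + 1/\<alpha>)" using assms by (simp add: field_simps)
  fix N :: nat and T :: real
  assume N: "even N \<and> 4 \<le> N \<and> 0 \<le> N"
  have lo: "real N \<le> gamma_alpha \<alpha> N" using lower N by simp
  have up: "gamma_alpha \<alpha> N \<le> 29 * (1 + 1/\<alpha>) * real N" using upper[OF assms] N by simp
  show "1 * real N \<le> gamma_alpha \<alpha> N" using lo by simp
  show "gamma_alpha \<alpha> N \<le> 29 * (1 + 1/\<alpha>) * real N" by (rule up)
  assume T: "T > 0"
  have I: "I0 \<alpha> N T = (gamma_alpha \<alpha> N / 2)^2 * T^2" by (simp add: I0_def)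
  have "(real N / 2)^2 \<le> (gamma_alpha \<alpha> N / 2)^2"
    by (rule power_mono) (use lo in auto)
  hence "(real N / 2)^2 * T^2 \<le> (gamma_alpha \<alpha> N / 2)^2 * T^2"
    by (rule mult_right_mono) simp
  thus "(1 / 2)^2 * T^2 * (real N)^2 \<le> I0 \<alpha> N T"
    unfolding I by (simp add: power_divide algebra_simps)
  have "(gamma_alpha \<alpha> N / 2)^2 \<le> (29 * (1 + 1/\<alpha>) * real N / 2)^2"
    by (rule power_mono) (use lo up in auto)
  hence "(gamma_alpha \<alpha> N / 2)^2 * T^2 \<le> (29 * (1 + 1/\<alpha>) * real N / 2)^2 * T^2"
    by (rule mult_right_mono) simp
  thus "I0 \<alpha> N T \<le> (29 * (1 + 1/\<alpha>) / 2)^2 * T^2 * (real N)^2"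
    unfolding I sq_aux[of "29 * (1 + 1/\<alpha>)" "real N" T, symmetric] .
qed

end
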